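(* For each $n\geq1$, the chromatic polynomial of $\Sigma_n$ is $\chi(\Sigma_n,\lambda)=(-1)^{3^n-1}\lambda P_n(\lambda)$, where $P_n=P_{2,n}+3P_{1,n}+P_{0,n}$ and $P_{i,n}(\lambda)=H_{i,n}(1-\lambda,0)$ for $i=0,1,2$.
   Context: Graphs are finite. For a graph $G$, a spanning subgraph $A$ has vertex set $V(G)$ and edge set $E(A)\subseteq E(G)$; $k(A)$ is its number of components, $r(A)=|V(G)|-k(A)$, $n(A)=|E(A)|-r(A)$; the weight of $A$ is $(x-1)^{r(G)-r(A)}(y-1)^{n(A)}$. The graphs $\Sigma_n$ ($n\ge1$; Schreier graphs of the Hanoi Towers group $H^{(3)}$ with loops removed) each have three outmost vertices top, left, right: $\Sigma_1$ is the triangle $K_3$; $\Sigma_{n+1}$ is the disjoint union of three copies $G_1,G_2,G_3$ of $\Sigma_n$ together with three new edges joining left$(G_1)$ to top$(G_2)$, right$(G_1)$ to top$(G_3)$, and right$(G_2)$ to left$(G_3)$; its outmost vertices are top$(G_1)$, left$(G_2)$, right$(G_3)$. $H_{2,n}$ (resp. $H_{1,n}$, $H_{0,n}$) is the sum of the weights (with $G=\Sigma_n$) of the spanning subgraphs of $\Sigma_n$ in which the three outmost vertices lie in one component (resp. left and right outmost in one component, top in another; resp. the three in three distinct components). $\chi(G,\lambda)$ is the number of proper colorings of the vertices of $G$ with $\lambda$ colors. *)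

theory Defs
  imports "HOL-Library.FuncSet"
begin

section \<open>General notions for a finite graph given by a vertex set V and a set E of
  2-element edges; spanning subgraphs are identified with their edge sets A \<subseteq> E.\<close>

definition adj :: "'v set set \<Rightarrow> ('v \<times> 'v) set" where
  "adj A = {(u, v). {u, v} \<in> A}"

definition conn :: "'v set set \<Rightarrow> ('v \<times> 'v) set" where
  "conn A = (adj A)\<^sup>*"

definition ncomp :: "'v set \<Rightarrow> 'v set set \<Rightarrow> nat" where
  "ncomp V A = card (V // conn A)"

definition rk :: "'v set \<Rightarrow> 'v set set \<Rightarrow> nat" where
  "rk V A = card V - ncomp V A"

definition nullity :: "'v set \<Rightarrow> 'v set set \<Rightarrow> nat" where
  "nullity V A = card A - rk V A"

definition weight :: "'v set \<Rightarrow> 'v set set \<Rightarrow> 'v set set \<Rightarrow> 'a::comm_ring_1 \<Rightarrow> 'a \<Rightarrow> 'a" where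
  "weight V E A x y = (x - 1) ^ (rk V E - rk V A) * (y - 1) ^ (nullity V A)"

definition chromatic :: "'v set \<Rightarrow> 'v set set \<Rightarrow> nat \<Rightarrow> nat" where
  "chromatic V E lam = card {c \<in> V \<rightarrow>\<^sub>E {..<lam}. \<forall>u v. {u, v} \<in> E \<longrightarrow> c u \<noteq> c v}"

section \<open>The graphs Sigma_n (vertices are words over {0,1,2})\<close>

fun sigV :: "nat \<Rightarrow> nat list set" where
  "sigV 0 = {}"
| "sigV (Suc 0) = {[0], [1], [2]}"
| "sigV (Suc (Suc n)) = (\<Union>i\<in>{0,1,2::nat}. (\<lambda>w. i # w) ` sigV (Suc n))"

fun sig_top :: "nat \<Rightarrow> nat list" where
  "sig_top 0 = []"
| "sig_top (Suc 0) = [0]"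
| "sig_top (Suc (Suc n)) = 0 # sig_top (Suc n)"

fun sig_left :: "nat \<Rightarrow> nat list" where
  "sig_left 0 = []"
| "sig_left (Suc 0) = [1]"
| "sig_left (Suc (Suc n)) = 1 # sig_left (Suc n)"

fun sig_right :: "nat \<Rightarrow> nat list" where
  "sig_right 0 = []"
| "sig_right (Suc 0) = [2]"
| "sig_right (Suc (Suc n)) = 2 # sig_right (Suc n)"

text \<open>Copy G_1, G_2, G_3 is obtained by prefixing 0, 1, 2 respectively.\<close>
fun sigE :: "nat \<Rightarrow> nat list set set" where
  "sigE 0 = {}"
| "sigE (Suc 0) = {{[0], [1]}, {[1], [2]}, {[0], [2]}}"
| "sigE (Suc (Suc n)) =
     (\<Union>i\<in>{0,1,2::nat}. (\<lambda>e. (\<lambda>w. i # w) ` e) ` sigE (Suc n))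
     \<union> {{0 # sig_left (Suc n), 1 # sig_top (Suc n)},
        {0 # sig_right (Suc n), 2 # sig_top (Suc n)},
        {1 # sig_right (Suc n), 2 # sig_left (Suc n)}}"

definition H2 :: "nat \<Rightarrow> 'a::comm_ring_1 \<Rightarrow> 'a \<Rightarrow> 'a" where
  "H2 n x y = (\<Sum>A \<in> {A. A \<subseteq> sigE n \<and>
        (sig_top n, sig_left n) \<in> conn A \<and> (sig_top n, sig_right n) \<in> conn A}.
      weight (sigV n) (sigE n) A x y)"

definition H1 :: "nat \<Rightarrow> 'a::comm_ring_1 \<Rightarrow> 'a \<Rightarrow> 'a" where
  "H1 n x y = (\<Sum>A \<in> {A. A \<subseteq> sigE n \<and>
        (sig_left n, sig_right n) \<in> conn A \<and> (sig_top n, sig_left n) \<notin> conn A}.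
      weight (sigV n) (sigE n) A x y)"

definition H0 :: "nat \<Rightarrow> 'a::comm_ring_1 \<Rightarrow> 'a \<Rightarrow> 'a" where
  "H0 n x y = (\<Sum>A \<in> {A. A \<subseteq> sigE n \<and>
        (sig_top n, sig_left n) \<notin> conn A \<and> (sig_top n, sig_right n) \<notin> conn A \<and>
        (sig_left n, sig_right n) \<notin> conn A}.
      weight (sigV n) (sigE n) A x y)"

definition P2 :: "nat \<Rightarrow> int \<Rightarrow> int" where "P2 n lam = H2 n (1 - lam) 0"
definition P1 :: "nat \<Rightarrow> int \<Rightarrow> int" where "P1 n lam = H1 n (1 - lam) 0"
definition P0 :: "nat \<Rightarrow> int \<Rightarrow> int" where "P0 n lam = H0 n (1 - lam) 0"

definition Pn :: "nat \<Rightarrow> int \<Rightarrow> int" where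
  "Pn n lam = P2 n lam + 3 * P1 n lam + P0 n lam"

end

theory Submission
  imports Defs
begin


lemma adj_sym: "(u,v) \<in> adj A \<Longrightarrow> (v,u) \<in> adj A"
  by (auto simp: adj_def insert_commute)

lemma conn_sym: assumes "(u,v) \<in> conn A" shows "(v,u) \<in> conn A"
proof -
  have s: "sym (adj A)" by (rule symI, erule adj_sym)
  have "sym (conn A)" unfolding conn_def using s by (rule sym_rtrancl)
  thus ?thesis using assms by (rule symD)
qed

lemma conn_trans: "(u,v) \<in> conn A \<Longrightarrow> (v,w) \<in> conn A \<Longrightarrow> (u,w) \<in> conn A"
  unfolding conn_def by (rule rtrancl_trans)

lemma conn_refl[simp]: "(u,u) \<in> conn A"
  unfolding conn_def by simp

lemma conn_edge: "{u,v} \<in> A \<Longrightarrow> (u,v) \<in> conn A"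
  unfolding conn_def by (rule r_into_rtrancl) (simp add: adj_def)

lemma conn_mono: "A \<subseteq> B \<Longrightarrow> (u,v) \<in> conn A \<Longrightarrow> (u,v) \<in> conn B"
  unfolding conn_def adj_def by (rule rtrancl_mono[THEN subsetD]) auto

lemma conn_class_eq: assumes "(x,y) \<in> conn A" shows "conn A `` {x} = conn A `` {y}"
proof
  show "conn A `` {x} \<subseteq> conn A `` {y}"
    using assms conn_sym[OF assms] conn_trans[of y x A] by blast
  show "conn A `` {y} \<subseteq> conn A `` {x}"
    using assms conn_trans[of x y A] by blast
qed

lemma adj_insert: "adj (insert {u,v} A) = insert (u,v) (insert (v,u) (adj A))"
  unfolding adj_def by (auto simp: doubleton_eq_iff)

lemma conn_insert_cases:
  assumes "(x,y) \<in> conn (insert {u,v} A)"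
  shows "(x,y) \<in> conn A \<or> (((x,u) \<in> conn A \<or> (x,v) \<in> conn A) \<and> ((u,y) \<in> conn A \<or> (v,y) \<in> conn A))"
  using assms unfolding conn_def adj_insert rtrancl_insert by auto

lemma ncomp_le:
  assumes "finite V" shows "ncomp V A \<le> card V"
proof -
  have "V // conn A = (\<lambda>x. conn A `` {x}) ` V" unfolding quotient_def by auto
  thus ?thesis unfolding ncomp_def using assms by (simp add: card_image_le)
qed

lemma ncomp_pos:
  assumes "finite V" "V \<noteq> {}" shows "ncomp V A \<ge> 1"
proof -
  have "V // conn A = (\<lambda>x. conn A `` {x}) ` V" unfolding quotient_def by auto
  thus ?thesis unfolding ncomp_def using assms by (simp add: Suc_le_eq card_gt_0_iff)
qed

lemma card_two_le: "card {a,b} \<le> 2"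
  by (cases "a = b") simp_all

lemma ncomp_insert:
  assumes "finite V" "u \<in> V" "v \<in> V"
  shows "ncomp V A \<le> ncomp V (insert {u,v} A) + 1"
proof -
  let ?R = "conn A" and ?R' = "conn (insert {u,v} A)"
  have subp: "(a,b) \<in> ?R'" if "(a,b) \<in> ?R" for a b
    by (rule conn_mono[OF _ that]) auto
  have sub: "?R \<subseteq> ?R'" using subp by (intro subrelI)
  have fin: "finite (V // ?R')" unfolding quotient_def using assms by auto
  have uin: "?R' `` {u} \<in> V // ?R'" using assms(2) unfolding quotient_def by auto
  have "V // ?R \<subseteq> {?R `` {u}, ?R `` {v}} \<union> (V // ?R' - {?R' `` {u}})"
  proof
    fix X assume "X \<in> V // ?R"
    then obtain x where x: "x \<in> V" "X = ?R `` {x}" unfolding quotient_def by auto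
    show "X \<in> {?R `` {u}, ?R `` {v}} \<union> (V // ?R' - {?R' `` {u}})"
    proof (cases "(u,x) \<in> ?R'")
      case True
      then have "(u,x) \<in> ?R \<or> (v,x) \<in> ?R"
        using conn_insert_cases[OF True] by blast
      then have "X = ?R `` {u} \<or> X = ?R `` {v}"
      proof
        assume "(u,x) \<in> ?R" then show ?thesis using x(2) conn_class_eq[of u x A] by simp
      next
        assume "(v,x) \<in> ?R" then show ?thesis using x(2) conn_class_eq[of v x A] by simp
      qed
      then show ?thesis by blast
    next
      case False
      have "?R' `` {x} = ?R `` {x}"
      proof
        show "?R `` {x} \<subseteq> ?R' `` {x}" using sub by auto
        show "?R' `` {x} \<subseteq> ?R `` {x}"
        proof
          fix y assume "y \<in> ?R' `` {x}"
          hence "(x,y) \<in> ?R'" by auto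
          have uv: "(u,v) \<in> ?R'" by (rule conn_edge) simp
          have n1: "(x,u) \<notin> ?R'"
          proof
            assume "(x,u) \<in> ?R'"
            then have "(u,x) \<in> ?R'" by (rule conn_sym)
            with False show False by simp
          qed
          have n2: "(x,v) \<notin> ?R'"
          proof
            assume "(x,v) \<in> ?R'"
            then have "(x,u) \<in> ?R'" by (rule conn_trans[OF _ conn_sym[OF uv]])
            with n1 show False by simp
          qed
          from conn_insert_cases[OF \<open>(x,y) \<in> ?R'\<close>] n1 n2 sub
          have "(x,y) \<in> ?R" by blast
          thus "y \<in> ?R `` {x}" by auto
        qed
      qed
      then have X': "X = ?R' `` {x}" using x(2) by simp
      have "x \<in> X" using x(2) by simp
      moreover have "x \<notin> ?R' `` {u}" using False by simp
      ultimately have "X \<noteq> ?R' `` {u}" by blast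
      moreover have "X \<in> V // ?R'" unfolding X' using x(1) by (rule quotientI)
      ultimately show ?thesis by simp
    qed
  qed
  hence "card (V // ?R) \<le> card ({?R `` {u}, ?R `` {v}} \<union> (V // ?R' - {?R' `` {u}}))"
    using fin by (intro card_mono) (rule finite_UnI, simp, simp)
  also have "\<dots> \<le> card {?R `` {u}, ?R `` {v}} + card (V // ?R' - {?R' `` {u}})"
    by (rule card_Un_le)
  also have "\<dots> \<le> 2 + (card (V // ?R') - 1)"
  proof (rule add_mono)
    show "card {?R `` {u}, ?R `` {v}} \<le> 2" by (rule card_two_le)
    show "card (V // ?R' - {?R' `` {u}}) \<le> card (V // ?R') - 1"
      using uin fin by (simp add: card_Diff_singleton)
  qed
  also have "\<dots> = card (V // ?R') + 1"
  proof -
    have ne: "V // ?R' \<noteq> {}" using uin by auto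
    have "card (V // ?R') > 0" using ne fin by (simp add: card_gt_0_iff)
    thus ?thesis by simp
  qed
  finally show ?thesis unfolding ncomp_def .
qed

lemma rank_le_card:
  assumes "finite V" "finite A" "\<forall>e\<in>A. \<exists>u v. e = {u,v} \<and> u \<in> V \<and> v \<in> V"
  shows "card V \<le> ncomp V A + card A"
  using assms(2,3)
proof (induction A rule: finite_induct)
  case empty
  have "V // conn {} = (\<lambda>x. {x}) ` V"
    unfolding quotient_def conn_def adj_def by auto
  thus ?case unfolding ncomp_def by (simp add: card_image)
next
  case (insert e A)
  then obtain u v where e: "e = {u,v}" "u \<in> V" "v \<in> V" by auto
  have "card V \<le> ncomp V A + card A" using insert by auto
  also have "\<dots> \<le> ncomp V (insert e A) + 1 + card A" using ncomp_insert[OF assms(1) e(2,3), of A] e by simp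
  finally show ?case using insert by simp
qed



lemma alt_sum_pow:
  assumes "finite S"
  shows "(\<Sum>T\<in>Pow S. (-1::int) ^ card T) = (if S = {} then 1 else 0)"
proof (cases "S = {}")
  case True then show ?thesis by simp
next
  case False
  have "card {T. T \<subseteq> S \<and> {} \<subseteq> T \<and> even (card T)} = card {T. T \<subseteq> S \<and> {} \<subseteq> T \<and> odd (card T)}"
    using assms False by (intro card_subsupersets_even_odd) auto
  hence "card {T. T \<in> Pow S \<and> even (card T)} = card {T. T \<in> Pow S \<and> odd (card T)}" by simp
  hence "(\<Sum>T\<in>Pow S. (-1::int) ^ card T) = 0"
    using assms by (intro sum_alternating_cancels) simp_all
  with False show ?thesis by simp
qed

lemma mono_conn:
  assumes "\<forall>u v. {u,v} \<in> A \<longrightarrow> c u = c v" "(x,y) \<in> conn A"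
  shows "c x = c y"
  using assms(2) unfolding conn_def
proof (induction rule: rtrancl_induct)
  case base then show ?case by simp
next
  case (step y z)
  then have "{y,z} \<in> A" by (simp add: adj_def)
  with assms(1) step.IH show ?case by simp
qed

lemma count_mono:
  assumes fV: "finite V" and eA: "\<forall>e\<in>A. \<exists>u v. e = {u,v} \<and> u \<in> V \<and> v \<in> V"
  shows "card {c \<in> V \<rightarrow>\<^sub>E {..<lam}. \<forall>u v. {u,v} \<in> A \<longrightarrow> c u = c v} = lam ^ ncomp V A"
proof -
  let ?R = "conn A"
  let ?Q = "V // ?R"
  let ?S = "{..<lam} :: nat set"
  let ?T = "{c \<in> V \<rightarrow>\<^sub>E ?S. \<forall>u v. {u,v} \<in> A \<longrightarrow> c u = c v}"
  define \<Phi> where "\<Phi> = (\<lambda>g. \<lambda>x\<in>V. g (?R `` {x}) :: nat)"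
  have fQ: "finite ?Q" unfolding quotient_def using fV by simp
  have cardQ: "card (?Q \<rightarrow>\<^sub>E ?S) = lam ^ ncomp V A"
    using fQ by (simp add: card_PiE ncomp_def)
  have inj: "inj_on \<Phi> (?Q \<rightarrow>\<^sub>E ?S)"
  proof (rule inj_onI)
    fix g1 g2 assume g1: "g1 \<in> ?Q \<rightarrow>\<^sub>E ?S" and g2: "g2 \<in> ?Q \<rightarrow>\<^sub>E ?S" and eq: "\<Phi> g1 = \<Phi> g2"
    show "g1 = g2"
    proof
      fix X show "g1 X = g2 X"
      proof (cases "X \<in> ?Q")
        case True
        then obtain x where x: "X = ?R `` {x}" "x \<in> V" by (rule quotientE)
        have "\<Phi> g1 x = \<Phi> g2 x" using eq by simp
        thus ?thesis using x unfolding \<Phi>_def by simp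
      next
        case False
        show ?thesis using PiE_arb[OF g1 False] PiE_arb[OF g2 False] by simp
      qed
    qed
  qed
  have img: "\<Phi> ` (?Q \<rightarrow>\<^sub>E ?S) = ?T"
  proof
    show "\<Phi> ` (?Q \<rightarrow>\<^sub>E ?S) \<subseteq> ?T"
    proof
      fix c assume "c \<in> \<Phi> ` (?Q \<rightarrow>\<^sub>E ?S)"
      then obtain g where g: "g \<in> ?Q \<rightarrow>\<^sub>E ?S" and c: "c = \<Phi> g" by blast
      have "c \<in> V \<rightarrow>\<^sub>E ?S"
      proof -
        have "\<And>x. x \<in> V \<Longrightarrow> g (?R `` {x}) \<in> ?S"
          using g by (auto intro: quotientI)
        thus ?thesis unfolding c \<Phi>_def by auto
      qed
      moreover have "\<forall>u v. {u,v} \<in> A \<longrightarrow> c u = c v"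
      proof (intro allI impI)
        fix u v assume uv: "{u,v} \<in> A"
        then obtain a b where ab: "{u,v} = {a,b}" "a \<in> V" "b \<in> V" using eA by blast
        have "u \<in> V" "v \<in> V" using ab by (auto simp: doubleton_eq_iff)
        moreover have "?R `` {u} = ?R `` {v}" using conn_class_eq[OF conn_edge[OF uv]] .
        ultimately show "c u = c v" unfolding c \<Phi>_def by simp
      qed
      ultimately show "c \<in> ?T" by simp
    qed
    show "?T \<subseteq> \<Phi> ` (?Q \<rightarrow>\<^sub>E ?S)"
    proof
      fix c assume cT: "c \<in> ?T"
      hence cP: "c \<in> V \<rightarrow>\<^sub>E ?S" and mono: "\<forall>u v. {u,v} \<in> A \<longrightarrow> c u = c v" by auto
      define g where "g = (\<lambda>X\<in>?Q. c (SOME x. x \<in> X))"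
      have key: "c (SOME x'. x' \<in> ?R `` {x}) = c x" for x
      proof -
        have "x \<in> ?R `` {x}" by simp
        hence "(SOME x'. x' \<in> ?R `` {x}) \<in> ?R `` {x}" by (rule someI)
        hence "(x, SOME x'. x' \<in> ?R `` {x}) \<in> ?R" by simp
        from mono_conn[OF mono this] show ?thesis by simp
      qed
      have "g \<in> ?Q \<rightarrow>\<^sub>E ?S"
      proof
        fix X assume "X \<in> ?Q"
        then obtain x where x: "X = ?R `` {x}" "x \<in> V" by (rule quotientE)
        have "g X = c x" using key \<open>X \<in> ?Q\<close> x(1) unfolding g_def by simp
        thus "g X \<in> ?S" using cP x(2) by auto
      next
        fix X assume "X \<notin> ?Q" thus "g X = undefined" unfolding g_def by simp
      qed
      moreover have "\<Phi> g = c"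
      proof
        fix x show "\<Phi> g x = c x"
        proof (cases "x \<in> V")
          case True
          then have "?R `` {x} \<in> ?Q" by (rule quotientI)
          then show ?thesis using True key unfolding \<Phi>_def g_def by simp
        next
          case False
          then show ?thesis using PiE_arb[OF cP False] unfolding \<Phi>_def by simp
        qed
      qed
      ultimately show "c \<in> \<Phi> ` (?Q \<rightarrow>\<^sub>E ?S)" by blast
    qed
  qed
  have "card (\<Phi> ` (?Q \<rightarrow>\<^sub>E ?S)) = card (?Q \<rightarrow>\<^sub>E ?S)" by (rule card_image[OF inj])
  hence "card ?T = card (?Q \<rightarrow>\<^sub>E ?S)" by (simp only: img)
  with cardQ show ?thesis by simp
qed



lemma chromatic_expansion:
  assumes fV: "finite V" and fE: "finite E"
    and eE: "\<forall>e\<in>E. \<exists>u v. e = {u,v} \<and> u \<in> V \<and> v \<in> V"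
  shows "int (chromatic V E lam) = (\<Sum>A\<in>Pow E. (-1) ^ card A * int lam ^ ncomp V A)"
proof -
  let ?C = "V \<rightarrow>\<^sub>E {..<lam}"
  define M where "M c = {e \<in> E. \<forall>a b. {a,b} = e \<longrightarrow> c a = c b}" for c :: "'a \<Rightarrow> nat"
  have fC: "finite ?C" using fV by (simp add: finite_PiE)
  have good: "(\<forall>u v. {u, v} \<in> E \<longrightarrow> c u \<noteq> c v) \<longleftrightarrow> M c = {}" for c
  proof
    assume H: "\<forall>u v. {u, v} \<in> E \<longrightarrow> c u \<noteq> c v"
    show "M c = {}"
    proof (rule ccontr)
      assume "M c \<noteq> {}"
      then obtain e where e: "e \<in> E" "\<forall>a b. {a,b} = e \<longrightarrow> c a = c b" unfolding M_def by blast
      then obtain u v where "e = {u,v}" using eE by blast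
      with e H show False by blast
    qed
  next
    assume H: "M c = {}"
    show "\<forall>u v. {u, v} \<in> E \<longrightarrow> c u \<noteq> c v"
    proof (intro allI impI notI)
      fix u v assume uv: "{u,v} \<in> E" "c u = c v"
      have "\<forall>a b. {a,b} = {u,v} \<longrightarrow> c a = c b"
        using uv(2) by (auto simp: doubleton_eq_iff)
      hence "{u,v} \<in> M c" using uv(1) unfolding M_def by blast
      with H show False by simp
    qed
  qed
  have sub: "A \<subseteq> M c \<longleftrightarrow> (\<forall>u v. {u,v} \<in> A \<longrightarrow> c u = c v)" if "A \<subseteq> E" for A c
    using that unfolding M_def by blast
  have fM: "finite (M c)" for c using fE unfolding M_def by simp
  have "int (chromatic V E lam) = int (card {c \<in> ?C. M c = {}})"
    unfolding chromatic_def using good by simp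
  also have "\<dots> = (\<Sum>c\<in>?C. if M c = {} then 1 else 0)"
    using fC by (simp add: sum.inter_filter[symmetric])
  also have "\<dots> = (\<Sum>c\<in>?C. \<Sum>A\<in>Pow (M c). (-1::int) ^ card A)"
    using alt_sum_pow[OF fM] by simp
  also have "\<dots> = (\<Sum>c\<in>?C. \<Sum>A\<in>Pow E. if A \<subseteq> M c then (-1::int) ^ card A else 0)"
  proof (rule sum.cong[OF refl])
    fix c
    have P: "Pow (M c) = {A \<in> Pow E. A \<subseteq> M c}" unfolding M_def by blast
    show "(\<Sum>A\<in>Pow (M c). (-1::int) ^ card A) = (\<Sum>A\<in>Pow E. if A \<subseteq> M c then (-1) ^ card A else 0)"
      unfolding P by (rule sum.inter_filter) (use fE in simp)
  qed
  also have "\<dots> = (\<Sum>A\<in>Pow E. \<Sum>c\<in>?C. if A \<subseteq> M c then (-1::int) ^ card A else 0)"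
    by (rule sum.swap)
  also have "\<dots> = (\<Sum>A\<in>Pow E. (-1) ^ card A * int lam ^ ncomp V A)"
  proof (rule sum.cong[OF refl])
    fix A assume "A \<in> Pow E"
    hence AE: "A \<subseteq> E" by simp
    have eA: "\<forall>e\<in>A. \<exists>u v. e = {u,v} \<and> u \<in> V \<and> v \<in> V" using eE AE by blast
    have "(\<Sum>c\<in>?C. if A \<subseteq> M c then (-1::int) ^ card A else 0)
        = (\<Sum>c\<in>{c \<in> ?C. A \<subseteq> M c}. (-1::int) ^ card A)"
      by (rule sum.inter_filter[symmetric]) (rule fC)
    also have "\<dots> = int (card {c \<in> ?C. A \<subseteq> M c}) * (-1) ^ card A" by simp
    also have "{c \<in> ?C. A \<subseteq> M c} = {c \<in> ?C. \<forall>u v. {u,v} \<in> A \<longrightarrow> c u = c v}"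
      using sub[OF AE] by blast
    also have "card \<dots> = lam ^ ncomp V A" by (rule count_mono[OF fV eA])
    finally show "(\<Sum>c\<in>?C. if A \<subseteq> M c then (-1::int) ^ card A else 0) = (-1) ^ card A * int lam ^ ncomp V A"
      by simp
  qed
  finally show ?thesis .
qed



lemma sig_top_rep: "sig_top n = replicate n 0"
  by (induction n rule: sig_top.induct) simp_all
lemma sig_left_rep: "sig_left n = replicate n 1"
  by (induction n rule: sig_left.induct) simp_all
lemma sig_right_rep: "sig_right n = replicate n 2"
  by (induction n rule: sig_right.induct) simp_all

lemma sigV_char: "sigV (Suc m) = {w. set w \<subseteq> {0,1,2} \<and> length w = Suc m}"
proof (induction m)
  case 0
  show ?case by (auto simp: length_Suc_conv)
next
  case (Suc m)
  have "sigV (Suc (Suc m)) = (\<Union>i\<in>{0,1,2::nat}. (\<lambda>w. i # w) ` sigV (Suc m))" by simp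
  also have "\<dots> = {w. set w \<subseteq> {0,1,2} \<and> length w = Suc (Suc m)}"
    unfolding Suc.IH by (auto simp: length_Suc_conv)
  finally show ?case .
qed

lemma card_sigV: "card (sigV (Suc m)) = 3 ^ Suc m"
proof -
  have f3: "finite {0,1,2::nat}" by simp
  have c3: "card {0,1,2::nat} = 3" by simp
  show ?thesis unfolding sigV_char card_lists_length_eq[OF f3] c3 ..
qed

lemma finite_sigV: "finite (sigV (Suc m))"
  unfolding sigV_char by (rule finite_lists_length_eq) simp

lemma corners_in: "sig_top (Suc m) \<in> sigV (Suc m)" "sig_left (Suc m) \<in> sigV (Suc m)"
   "sig_right (Suc m) \<in> sigV (Suc m)"
  unfolding sigV_char sig_top_rep sig_left_rep sig_right_rep by auto

definition Br :: "nat \<Rightarrow> nat list set set" where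
  "Br k = {{0 # replicate k 1, 1 # replicate k 0}, {0 # replicate k 2, 2 # replicate k 0},
           {1 # replicate k 2, 2 # replicate k 1}}"

definition Cp :: "nat \<Rightarrow> nat list set set \<Rightarrow> nat list set set" where
  "Cp i E = (\<lambda>e. (\<lambda>w. i # w) ` e) ` E"

lemma sigE_SS: "sigE (Suc (Suc m)) = (\<Union>i\<in>{0,1,2::nat}. Cp i (sigE (Suc m))) \<union> Br (Suc m)"
  unfolding Br_def Cp_def by (simp add: sig_top_rep sig_left_rep sig_right_rep)

lemma sigE_edges: "\<forall>e\<in>sigE (Suc m). \<exists>u v. e = {u,v} \<and> u \<in> sigV (Suc m) \<and> v \<in> sigV (Suc m)"
proof (induction m)
  case 0
  show ?case by auto
next
  case (Suc m)
  show ?case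
  proof
    fix e assume "e \<in> sigE (Suc (Suc m))"
    then consider (c) i e' where "i \<in> {0,1,2}" "e' \<in> sigE (Suc m)" "e = (\<lambda>w. i # w) ` e'"
      | (b) "e \<in> Br (Suc m)"
    proof -
      assume c: "\<And>i e'. i \<in> {0,1,2} \<Longrightarrow> e' \<in> sigE (Suc m) \<Longrightarrow> e = (\<lambda>w. i # w) ` e' \<Longrightarrow> thesis"
        and b: "e \<in> Br (Suc m) \<Longrightarrow> thesis"
      from \<open>e \<in> sigE (Suc (Suc m))\<close> have "e \<in> (\<Union>i\<in>{0,1,2::nat}. Cp i (sigE (Suc m))) \<or> e \<in> Br (Suc m)"
        unfolding sigE_SS by (rule UnE) simp_all
      then show thesis
      proof
        assume "e \<in> (\<Union>i\<in>{0,1,2::nat}. Cp i (sigE (Suc m)))"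
        then obtain i where i: "i \<in> {0,1,2}" "e \<in> Cp i (sigE (Suc m))" by (rule UN_E)
        from i(2) obtain e' where "e' \<in> sigE (Suc m)" "e = (\<lambda>w. i # w) ` e'" unfolding Cp_def by (rule imageE)
        with i(1) show thesis by (rule c)
      next
        assume "e \<in> Br (Suc m)" then show thesis by (rule b)
      qed
    qed
    then show "\<exists>u v. e = {u,v} \<and> u \<in> sigV (Suc (Suc m)) \<and> v \<in> sigV (Suc (Suc m))"
    proof cases
      case c
      then obtain u v where uv: "e' = {u,v}" "u \<in> sigV (Suc m)" "v \<in> sigV (Suc m)" using Suc.IH by blast
      have "e = {i # u, i # v}" using c(3) uv(1) by simp
      moreover have "i # u \<in> sigV (Suc (Suc m))" "i # v \<in> sigV (Suc (Suc m))"
        using c(1) uv(2,3) by (simp_all only: sigV.simps) blast+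
      ultimately show ?thesis by blast
    next
      case b
      have r: "i # replicate (Suc m) j \<in> sigV (Suc (Suc m))" if "i \<in> {0,1,2}" "j \<in> {0,1,2}" for i j
      proof -
        have "set (i # replicate (Suc m) j) \<subseteq> {0,1,2}" using that by (simp add: set_replicate_conv_if)
        thus ?thesis unfolding sigV_char by simp
      qed
      from b consider "e = {0 # replicate (Suc m) 1, 1 # replicate (Suc m) 0}"
        | "e = {0 # replicate (Suc m) 2, 2 # replicate (Suc m) 0}"
        | "e = {1 # replicate (Suc m) 2, 2 # replicate (Suc m) 1}" unfolding Br_def by blast
      then show ?thesis
      proof cases
        case 1 then show ?thesis using r[of 0 1] r[of 1 0] by blast
      next
        case 2 then show ?thesis using r[of 0 2] r[of 2 0] by blast
      next
        case 3 then show ?thesis using r[of 1 2] r[of 2 1] by blast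
      qed
    qed
  qed
qed

lemma finite_sigE: "finite (sigE (Suc m))"
proof -
  have "sigE (Suc m) \<subseteq> Pow (sigV (Suc m))"
  proof
    fix e assume "e \<in> sigE (Suc m)"
    from bspec[OF sigE_edges[of m] this] obtain u v
      where "e = {u,v}" "u \<in> sigV (Suc m)" "v \<in> sigV (Suc m)" by blast
    thus "e \<in> Pow (sigV (Suc m))" by simp
  qed
  thus ?thesis by (rule finite_subset) (simp add: finite_sigV)
qed

lemma conn_prefix:
  assumes "(x,y) \<in> conn A" shows "(i # x, i # y) \<in> conn (Cp i A)"
  using assms unfolding conn_def
proof (induction rule: rtrancl_induct)
  case base then show ?case by (rule rtrancl_refl)
next
  case (step y z)
  then have yz: "{y,z} \<in> A" by (simp add: adj_def)
  have "{i # y, i # z} = (\<lambda>w. i # w) ` {y,z}" by simp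
  then have "{i # y, i # z} \<in> Cp i A" unfolding Cp_def using yz by (rule image_eqI)
  then have "(i # y, i # z) \<in> adj (Cp i A)" by (simp add: adj_def)
  with step.IH show ?case by (rule rtrancl_into_rtrancl)
qed

lemma sig_connected: "\<forall>x\<in>sigV (Suc m). (sig_top (Suc m), x) \<in> conn (sigE (Suc m))"
proof (induction m)
  case 0
  have "([0],[1]) \<in> conn (sigE (Suc 0))" by (rule conn_edge) simp
  moreover have "([0],[2]) \<in> conn (sigE (Suc 0))" by (rule conn_edge) simp
  ultimately show ?case by auto
next
  case (Suc m)
  let ?E = "sigE (Suc (Suc m))" and ?E' = "sigE (Suc m)"
  let ?T = "sig_top (Suc m)" and ?L = "sig_left (Suc m)" and ?R = "sig_right (Suc m)"
  have cp: "(i # a, i # b) \<in> conn ?E" if "i \<in> {0,1,2}" "(a,b) \<in> conn ?E'" for i a b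
  proof -
    have "Cp i ?E' \<subseteq> ?E" using that(1) unfolding sigE_SS by blast
    thus ?thesis using conn_prefix[OF that(2)] by (rule conn_mono)
  qed
  have top: "(0 # ?T, i # ?T) \<in> conn ?E" if i: "i \<in> {0,1,2}" for i
  proof -
    consider "i = 0" | "i = 1" | "i = 2" using i by blast
    then show ?thesis
    proof cases
      case 1 then show ?thesis by simp
    next
      case 2
      have a: "(0 # ?T, 0 # ?L) \<in> conn ?E" using cp[of 0 ?T ?L] Suc.IH corners_in by simp
      have "{0 # ?L, 1 # ?T} \<in> ?E" by simp
      hence "(0 # ?L, 1 # ?T) \<in> conn ?E" by (rule conn_edge)
      with a 2 show ?thesis using conn_trans by metis
    next
      case 3
      have a: "(0 # ?T, 0 # ?R) \<in> conn ?E" using cp[of 0 ?T ?R] Suc.IH corners_in by simp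
      have "{0 # ?R, 2 # ?T} \<in> ?E" by simp
      hence "(0 # ?R, 2 # ?T) \<in> conn ?E" by (rule conn_edge)
      with a 3 show ?thesis using conn_trans by metis
    qed
  qed
  show ?case
  proof
    fix x assume "x \<in> sigV (Suc (Suc m))"
    then obtain i w where iw: "i \<in> {0,1,2}" "w \<in> sigV (Suc m)" "x = i # w" by auto
    have "(i # ?T, i # w) \<in> conn ?E" using cp[OF iw(1)] Suc.IH iw(2) by simp
    with top[OF iw(1)] have "(0 # ?T, x) \<in> conn ?E" using iw(3) conn_trans by metis
    thus "(sig_top (Suc (Suc m)), x) \<in> conn ?E" by simp
  qed
qed

lemma ncomp_sig: "ncomp (sigV (Suc m)) (sigE (Suc m)) = 1"
proof -
  let ?V = "sigV (Suc m)" and ?R = "conn (sigE (Suc m))" and ?T = "sig_top (Suc m)"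
  have "?V // ?R = {?R `` {?T}}"
  proof
    show "?V // ?R \<subseteq> {?R `` {?T}}"
    proof
      fix X assume "X \<in> ?V // ?R"
      then obtain x where x: "X = ?R `` {x}" "x \<in> ?V" by (rule quotientE)
      have "(?T, x) \<in> ?R" using bspec[OF sig_connected x(2)] .
      hence "?R `` {?T} = ?R `` {x}" by (rule conn_class_eq)
      thus "X \<in> {?R `` {?T}}" using x(1) by simp
    qed
    have "?R `` {?T} \<in> ?V // ?R" using corners_in(1) by (rule quotientI)
    thus "{?R `` {?T}} \<subseteq> ?V // ?R" by simp
  qed
  thus ?thesis unfolding ncomp_def by simp
qed



definition gi :: "('v \<Rightarrow> 'v) \<Rightarrow> 'v set set \<Rightarrow> 'v set set" where
  "gi f A = (\<lambda>e. f ` e) ` A"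

context
  fixes f :: "'v \<Rightarrow> 'v"
  assumes inv: "\<And>x. f (f x) = x"
begin

lemma ff_img: "f ` (f ` e) = e"
  by (simp add: image_image inv)

lemma gi_gi: "gi f (gi f A) = A"
  unfolding gi_def by (simp add: image_image ff_img inv)

lemma adj_gi: "(u,v) \<in> adj (gi f A) \<longleftrightarrow> (f u, f v) \<in> adj A"
proof
  assume "(u,v) \<in> adj (gi f A)"
  then have "{u,v} \<in> gi f A" by (simp add: adj_def)
  then obtain e where e: "e \<in> A" "{u,v} = f ` e" unfolding gi_def by (rule imageE)
  have "f ` {u,v} = e" using e(2) ff_img by simp
  hence "{f u, f v} = e" by simp
  with e(1) show "(f u, f v) \<in> adj A" by (simp add: adj_def)
next
  assume "(f u, f v) \<in> adj A"
  then have "{f u, f v} \<in> A" by (simp add: adj_def)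
  moreover have "{u,v} = f ` {f u, f v}" by (simp add: inv)
  ultimately have "{u,v} \<in> gi f A" unfolding gi_def by (rule rev_image_eqI)
  then show "(u,v) \<in> adj (gi f A)" by (simp add: adj_def)
qed

lemma conn_gi1: "(u,v) \<in> conn (gi f A) \<Longrightarrow> (f u, f v) \<in> conn A"
  unfolding conn_def
proof (induction rule: rtrancl_induct)
  case base then show ?case by (rule rtrancl_refl)
next
  case (step y z)
  from step.hyps(2) have "(f y, f z) \<in> adj A" by (simp add: adj_gi)
  with step.IH show ?case by (rule rtrancl_into_rtrancl)
qed

lemma conn_gi: "(u,v) \<in> conn (gi f A) \<longleftrightarrow> (f u, f v) \<in> conn A"
proof
  assume "(u,v) \<in> conn (gi f A)" then show "(f u, f v) \<in> conn A" by (rule conn_gi1)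
next
  assume "(f u, f v) \<in> conn A"
  then have "(f u, f v) \<in> conn (gi f (gi f A))" by (simp add: gi_gi)
  then have "(f (f u), f (f v)) \<in> conn (gi f A)" by (rule conn_gi1)
  then show "(u,v) \<in> conn (gi f A)" by (simp add: inv)
qed

lemma class_gi: "conn (gi f A) `` {x} = f ` (conn A `` {f x})"
proof
  show "conn (gi f A) `` {x} \<subseteq> f ` (conn A `` {f x})"
  proof
    fix y assume "y \<in> conn (gi f A) `` {x}"
    then have "(f x, f y) \<in> conn A" by (simp add: conn_gi)
    then have "f y \<in> conn A `` {f x}" by simp
    then have "f (f y) \<in> f ` (conn A `` {f x})" by (rule imageI)
    then show "y \<in> f ` (conn A `` {f x})" by (simp add: inv)
  qed
  show "f ` (conn A `` {f x}) \<subseteq> conn (gi f A) `` {x}"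
  proof
    fix y assume "y \<in> f ` (conn A `` {f x})"
    then obtain z where z: "(f x, z) \<in> conn A" "y = f z" by auto
    then have "(f x, f y) \<in> conn A" by (simp add: inv)
    then show "y \<in> conn (gi f A) `` {x}" by (simp add: conn_gi)
  qed
qed

lemma inj_img: "inj_on (\<lambda>e. f ` e) X"
proof (rule inj_onI)
  fix a b assume "f ` a = f ` b"
  then have "f ` (f ` a) = f ` (f ` b)" by simp
  then show "a = b" by (simp add: ff_img)
qed

lemma ncomp_gi:
  assumes V: "f ` V = V"
  shows "ncomp V (gi f A) = ncomp V A"
proof -
  have "V // conn (gi f A) = (\<lambda>e. f ` e) ` (V // conn A)"
  proof -
    have "V // conn (gi f A) = (\<lambda>x. conn (gi f A) `` {x}) ` V" unfolding quotient_def by auto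
    also have "\<dots> = (\<lambda>x. f ` (conn A `` {f x})) ` V" by (simp add: class_gi)
    also have "\<dots> = (\<lambda>e. f ` e) ` ((\<lambda>z. conn A `` {z}) ` (f ` V))" by (simp add: image_image)
    also have "\<dots> = (\<lambda>e. f ` e) ` (V // conn A)" unfolding V unfolding quotient_def by auto
    finally show ?thesis .
  qed
  then show ?thesis unfolding ncomp_def by (simp add: card_image[OF inj_img])
qed

lemma card_gi: "card (gi f A) = card A"
  unfolding gi_def by (rule card_image[OF inj_img])

lemma weight_gi:
  assumes "f ` V = V"
  shows "weight V E (gi f A) x y = weight V E A x y"
  unfolding weight_def rk_def nullity_def using ncomp_gi[OF assms] card_gi by simp

lemma gi_mono: "A \<subseteq> E \<Longrightarrow> gi f A \<subseteq> gi f E"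
  unfolding gi_def by (rule image_mono)

lemma sum_gi:
  assumes V: "f ` V = V" and E: "gi f E = E"
  shows "(\<Sum>A\<in>{A. A \<subseteq> E \<and> P A}. weight V E A x y)
       = (\<Sum>A\<in>{A. A \<subseteq> E \<and> P (gi f A)}. weight V E A x y)"
proof (rule sum.reindex_bij_witness[where i = "gi f" and j = "gi f"])
  fix a assume a: "a \<in> {A. A \<subseteq> E \<and> P A}"
  show "gi f (gi f a) = a" by (rule gi_gi)
  have "gi f a \<subseteq> E" using gi_mono[of a E] a E by simp
  then show "gi f a \<in> {A. A \<subseteq> E \<and> P (gi f A)}" using a by (simp add: gi_gi)
  show "weight V E (gi f a) x y = weight V E a x y" by (rule weight_gi[OF V])
next
  fix b assume b: "b \<in> {A. A \<subseteq> E \<and> P (gi f A)}"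
  show "gi f (gi f b) = b" by (rule gi_gi)
  have "gi f b \<subseteq> E" using gi_mono[of b E] b E by simp
  then show "gi f b \<in> {A. A \<subseteq> E \<and> P A}" using b by simp
qed

end



definition sw01 :: "nat \<Rightarrow> nat" where "sw01 k = (if k = 0 then 1 else if k = 1 then 0 else k)"
definition sw02 :: "nat \<Rightarrow> nat" where "sw02 k = (if k = 0 then 2 else if k = 2 then 0 else k)"

lemma map_inv: "(\<And>k. s (s k) = k) \<Longrightarrow> map s (map s w) = w"
  by (induction w) simp_all

lemma sigV_inv:
  assumes inv: "\<And>k. s (s k) = k" and perm: "s ` {0,1,2} = {0,1,2}"
  shows "map s ` sigV (Suc m) = sigV (Suc m)"
proof -
  have sub: "map s w \<in> sigV (Suc m)" if "w \<in> sigV (Suc m)" for w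
  proof -
    have "set w \<subseteq> {0,1,2}" "length w = Suc m" using that unfolding sigV_char by simp_all
    have "set (map s w) = s ` set w" by simp
    also have "\<dots> \<subseteq> s ` {0,1,2}" using \<open>set w \<subseteq> {0,1,2}\<close> by (rule image_mono)
    also have "\<dots> = {0,1,2}" by (rule perm)
    finally have "set (map s w) \<subseteq> {0,1,2}" .
    moreover have "length (map s w) = Suc m" using \<open>length w = Suc m\<close> by simp
    ultimately show ?thesis unfolding sigV_char by simp
  qed
  show ?thesis
  proof
    show "map s ` sigV (Suc m) \<subseteq> sigV (Suc m)" by (rule image_subsetI) (rule sub)
    show "sigV (Suc m) \<subseteq> map s ` sigV (Suc m)"
    proof
      fix w assume "w \<in> sigV (Suc m)"
      then have "map s w \<in> sigV (Suc m)" by (rule sub)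
      then have "map s (map s w) \<in> map s ` sigV (Suc m)" by (rule imageI)
      then show "w \<in> map s ` sigV (Suc m)" using map_inv[OF inv] by simp
    qed
  qed
qed

lemma gi_Cp: "gi (map s) (Cp i E) = Cp (s i) (gi (map s) E)"
  unfolding gi_def Cp_def by (simp add: image_image)

lemma sigE_inv:
  assumes perm: "s ` {0,1,2} = {0,1,2}"
    and base: "gi (map s) (sigE (Suc 0)) = sigE (Suc 0)"
    and br: "\<And>k. gi (map s) (Br k) = Br k"
  shows "gi (map s) (sigE (Suc m)) = sigE (Suc m)"
proof (induction m)
  case 0 show ?case by (rule base)
next
  case (Suc m)
  have "gi (map s) (sigE (Suc (Suc m)))
      = (\<Union>i\<in>{0,1,2::nat}. gi (map s) (Cp i (sigE (Suc m)))) \<union> gi (map s) (Br (Suc m))"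
    unfolding sigE_SS gi_def by (simp only: image_Un image_UN)
  also have "\<dots> = (\<Union>i\<in>{0,1,2::nat}. Cp (s i) (sigE (Suc m))) \<union> Br (Suc m)"
    by (simp only: gi_Cp Suc.IH br)
  also have "(\<Union>i\<in>{0,1,2::nat}. Cp (s i) (sigE (Suc m))) = (\<Union>j\<in>s ` {0,1,2}. Cp j (sigE (Suc m)))"
    by (simp only: image_image)
  also have "\<dots> = (\<Union>j\<in>{0,1,2}. Cp j (sigE (Suc m)))" by (simp only: perm)
  finally show ?case unfolding sigE_SS .
qed



lemma sw01_inv: "sw01 (sw01 k) = k" by (simp add: sw01_def)
lemma sw02_inv: "sw02 (sw02 k) = k" by (simp add: sw02_def)
lemma sw01_perm: "sw01 ` {0,1,2} = {0,1,2}" by (simp add: sw01_def insert_commute)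
lemma sw02_perm: "sw02 ` {0,1,2} = {0,1,2}" by (simp add: sw02_def insert_commute)
lemma sw01_base: "gi (map sw01) (sigE (Suc 0)) = sigE (Suc 0)"
  by (simp add: sw01_def gi_def insert_commute)
lemma sw02_base: "gi (map sw02) (sigE (Suc 0)) = sigE (Suc 0)"
  by (simp add: sw02_def gi_def insert_commute)
lemma sw01_br: "gi (map sw01) (Br k) = Br k"
  by (simp add: sw01_def gi_def Br_def map_replicate insert_commute)
lemma sw02_br: "gi (map sw02) (Br k) = Br k"
  by (simp add: sw02_def gi_def Br_def map_replicate insert_commute)


lemma eqv3:
  assumes sym: "\<And>u v. (u,v) \<in> R \<Longrightarrow> (v,u) \<in> R"
    and tr: "\<And>u v w. (u,v) \<in> R \<Longrightarrow> (v,w) \<in> R \<Longrightarrow> (u,w) \<in> R"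
  shows "((l,t) \<in> R \<and> (r,l) \<notin> R) \<longleftrightarrow> ((t,l) \<in> R \<and> (t,r) \<notin> R)"
    and "((t,r) \<in> R \<and> (l,t) \<notin> R) \<longleftrightarrow> ((t,l) \<notin> R \<and> (t,r) \<in> R)"
    and "((l,r) \<in> R \<and> (t,l) \<notin> R) \<longleftrightarrow> (((t,l) \<notin> R \<and> (t,r) \<notin> R) \<and> (l,r) \<in> R)"
  using sym tr by blast+

lemma eqv3c1: "((l,t) \<in> conn A \<and> (r,l) \<notin> conn A) \<longleftrightarrow> ((t,l) \<in> conn A \<and> (t,r) \<notin> conn A)"
  by (rule eqv3(1)[where R="conn A"]) (erule conn_sym, erule (1) conn_trans)
lemma eqv3c2: "((t,r) \<in> conn A \<and> (l,t) \<notin> conn A) \<longleftrightarrow> ((t,l) \<notin> conn A \<and> (t,r) \<in> conn A)"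
  by (rule eqv3(2)[where R="conn A"]) (erule conn_sym, erule (1) conn_trans)
lemma eqv3c3: "((l,r) \<in> conn A \<and> (t,l) \<notin> conn A) \<longleftrightarrow> (((t,l) \<notin> conn A \<and> (t,r) \<notin> conn A) \<and> (l,r) \<in> conn A)"
  by (rule eqv3(3)[where R="conn A"]) (erule conn_sym, erule (1) conn_trans)
lemmas eqv3c = eqv3c1 eqv3c2 eqv3c3

lemma sum_split:
  assumes "finite E"
  shows "(\<Sum>A\<in>{A. A \<subseteq> E \<and> P A}. g A) =
         (\<Sum>A\<in>{A. A \<subseteq> E \<and> P A \<and> Q A}. g A) + (\<Sum>A\<in>{A. A \<subseteq> E \<and> P A \<and> \<not> Q A}. g A)"
proof -
  have f: "finite {A. A \<subseteq> E \<and> P A \<and> Q A}" "finite {A. A \<subseteq> E \<and> P A \<and> \<not> Q A}"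
    using assms by simp_all
  have u: "{A. A \<subseteq> E \<and> P A} = {A. A \<subseteq> E \<and> P A \<and> Q A} \<union> {A. A \<subseteq> E \<and> P A \<and> \<not> Q A}" by blast
  have d: "{A. A \<subseteq> E \<and> P A \<and> Q A} \<inter> {A. A \<subseteq> E \<and> P A \<and> \<not> Q A} = {}" by blast
  show ?thesis unfolding u by (rule sum.union_disjoint[OF f d])
qed

lemma tutte_decomp:
  fixes x y :: int
  shows "(\<Sum>A\<in>Pow (sigE (Suc m)). weight (sigV (Suc m)) (sigE (Suc m)) A x y)
     = H2 (Suc m) x y + 3 * H1 (Suc m) x y + H0 (Suc m) x y"
proof -
  let ?V = "sigV (Suc m)" and ?E = "sigE (Suc m)"
  let ?t = "sig_top (Suc m)" and ?l = "sig_left (Suc m)" and ?r = "sig_right (Suc m)"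
  let ?g = "\<lambda>A. weight ?V ?E A x y"
  let ?a = "\<lambda>A. (?t, ?l) \<in> conn A" and ?b = "\<lambda>A. (?t, ?r) \<in> conn A" and ?c = "\<lambda>A. (?l, ?r) \<in> conn A"
  have fE: "finite ?E" by (rule finite_sigE)
  have "Pow ?E = {A. A \<subseteq> ?E \<and> True}" by (simp add: Pow_def)
  hence "(\<Sum>A\<in>Pow ?E. ?g A) = (\<Sum>A\<in>{A. A \<subseteq> ?E \<and> True}. ?g A)" by simp
  also have "\<dots> = (\<Sum>A\<in>{A. A \<subseteq> ?E \<and> True \<and> ?a A}. ?g A) + (\<Sum>A\<in>{A. A \<subseteq> ?E \<and> True \<and> \<not> ?a A}. ?g A)"
    by (rule sum_split[OF fE])
  also have "(\<Sum>A\<in>{A. A \<subseteq> ?E \<and> True \<and> ?a A}. ?g A) = (\<Sum>A\<in>{A. A \<subseteq> ?E \<and> ?a A}. ?g A)" by simp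
  also have "(\<Sum>A\<in>{A. A \<subseteq> ?E \<and> True \<and> \<not> ?a A}. ?g A) = (\<Sum>A\<in>{A. A \<subseteq> ?E \<and> \<not> ?a A}. ?g A)" by simp
  also have "(\<Sum>A\<in>{A. A \<subseteq> ?E \<and> ?a A}. ?g A) = (\<Sum>A\<in>{A. A \<subseteq> ?E \<and> ?a A \<and> ?b A}. ?g A) + (\<Sum>A\<in>{A. A \<subseteq> ?E \<and> ?a A \<and> \<not> ?b A}. ?g A)"
    by (rule sum_split[OF fE])
  also have "(\<Sum>A\<in>{A. A \<subseteq> ?E \<and> \<not> ?a A}. ?g A) = (\<Sum>A\<in>{A. A \<subseteq> ?E \<and> \<not> ?a A \<and> ?b A}. ?g A) + (\<Sum>A\<in>{A. A \<subseteq> ?E \<and> \<not> ?a A \<and> \<not> ?b A}. ?g A)"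
    by (rule sum_split[OF fE])
  also have "(\<Sum>A\<in>{A. A \<subseteq> ?E \<and> \<not> ?a A \<and> \<not> ?b A}. ?g A) = (\<Sum>A\<in>{A. A \<subseteq> ?E \<and> (\<not> ?a A \<and> \<not> ?b A) \<and> ?c A}. ?g A) + (\<Sum>A\<in>{A. A \<subseteq> ?E \<and> (\<not> ?a A \<and> \<not> ?b A) \<and> \<not> ?c A}. ?g A)"
    by (rule sum_split[OF fE])
  also have "(\<Sum>A\<in>{A. A \<subseteq> ?E \<and> (\<not> ?a A \<and> \<not> ?b A) \<and> \<not> ?c A}. ?g A) = H0 (Suc m) x y"
    unfolding H0_def by (simp add: conj_assoc)
  also have "(\<Sum>A\<in>{A. A \<subseteq> ?E \<and> ?a A \<and> ?b A}. ?g A) = H2 (Suc m) x y"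
    unfolding H2_def by simp
  also have "(\<Sum>A\<in>{A. A \<subseteq> ?E \<and> (\<not> ?a A \<and> \<not> ?b A) \<and> ?c A}. ?g A) = H1 (Suc m) x y"
  proof -
    have "{A. A \<subseteq> ?E \<and> (\<not> ?a A \<and> \<not> ?b A) \<and> ?c A} = {A. A \<subseteq> ?E \<and> ?c A \<and> \<not> ?a A}"
    proof (rule Collect_cong)
      fix A show "(A \<subseteq> ?E \<and> (\<not> ?a A \<and> \<not> ?b A) \<and> ?c A) = (A \<subseteq> ?E \<and> ?c A \<and> \<not> ?a A)"
        using eqv3c(3)[where A=A and l="?l" and t="?t" and r="?r"] by blast
    qed
    thus ?thesis unfolding H1_def by simp
  qed
  also have "(\<Sum>A\<in>{A. A \<subseteq> ?E \<and> ?a A \<and> \<not> ?b A}. ?g A) = H1 (Suc m) x y"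
  proof -
    let ?f = "map sw02"
    have inv: "\<And>w. ?f (?f w) = w" by (rule map_inv) (rule sw02_inv)
    have V: "?f ` ?V = ?V" by (rule sigV_inv) (rule sw02_inv, rule sw02_perm)
    have E: "gi ?f ?E = ?E" by (rule sigE_inv) (rule sw02_perm, rule sw02_base, rule sw02_br)
    have ct: "?f ?t = ?r" "?f ?r = ?t" "?f ?l = ?l"
      by (simp_all add: sig_top_rep sig_left_rep sig_right_rep map_replicate sw02_def)
    have "H1 (Suc m) x y = (\<Sum>A\<in>{A. A \<subseteq> ?E \<and> (?l, ?r) \<in> conn (gi ?f A) \<and> (?t, ?l) \<notin> conn (gi ?f A)}. ?g A)"
      unfolding H1_def by (rule sum_gi[OF inv V E, where P = "\<lambda>A. (?l, ?r) \<in> conn A \<and> (?t, ?l) \<notin> conn A"])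
    also have "{A. A \<subseteq> ?E \<and> (?l, ?r) \<in> conn (gi ?f A) \<and> (?t, ?l) \<notin> conn (gi ?f A)} = {A. A \<subseteq> ?E \<and> ?a A \<and> \<not> ?b A}"
    proof (rule Collect_cong)
      fix A
      have "(?l, ?r) \<in> conn (gi ?f A) \<longleftrightarrow> (?l, ?t) \<in> conn A" using conn_gi[OF inv] ct by simp
      moreover have "(?t, ?l) \<in> conn (gi ?f A) \<longleftrightarrow> (?r, ?l) \<in> conn A" using conn_gi[OF inv] ct by simp
      ultimately show "(A \<subseteq> ?E \<and> (?l, ?r) \<in> conn (gi ?f A) \<and> (?t, ?l) \<notin> conn (gi ?f A)) = (A \<subseteq> ?E \<and> ?a A \<and> \<not> ?b A)"
        using eqv3c(1)[where A=A and l="?l" and t="?t" and r="?r"] by simp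
    qed
    finally show ?thesis by simp
  qed
  also have "(\<Sum>A\<in>{A. A \<subseteq> ?E \<and> \<not> ?a A \<and> ?b A}. ?g A) = H1 (Suc m) x y"
  proof -
    let ?f = "map sw01"
    have inv: "\<And>w. ?f (?f w) = w" by (rule map_inv) (rule sw01_inv)
    have V: "?f ` ?V = ?V" by (rule sigV_inv) (rule sw01_inv, rule sw01_perm)
    have E: "gi ?f ?E = ?E" by (rule sigE_inv) (rule sw01_perm, rule sw01_base, rule sw01_br)
    have ct: "?f ?t = ?l" "?f ?l = ?t" "?f ?r = ?r"
      by (simp_all add: sig_top_rep sig_left_rep sig_right_rep map_replicate sw01_def)
    have "H1 (Suc m) x y = (\<Sum>A\<in>{A. A \<subseteq> ?E \<and> (?l, ?r) \<in> conn (gi ?f A) \<and> (?t, ?l) \<notin> conn (gi ?f A)}. ?g A)"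
      unfolding H1_def by (rule sum_gi[OF inv V E, where P = "\<lambda>A. (?l, ?r) \<in> conn A \<and> (?t, ?l) \<notin> conn A"])
    also have "{A. A \<subseteq> ?E \<and> (?l, ?r) \<in> conn (gi ?f A) \<and> (?t, ?l) \<notin> conn (gi ?f A)} = {A. A \<subseteq> ?E \<and> \<not> ?a A \<and> ?b A}"
    proof (rule Collect_cong)
      fix A
      have "(?l, ?r) \<in> conn (gi ?f A) \<longleftrightarrow> (?t, ?r) \<in> conn A" using conn_gi[OF inv] ct by simp
      moreover have "(?t, ?l) \<in> conn (gi ?f A) \<longleftrightarrow> (?l, ?t) \<in> conn A" using conn_gi[OF inv] ct by simp
      ultimately show "(A \<subseteq> ?E \<and> (?l, ?r) \<in> conn (gi ?f A) \<and> (?t, ?l) \<notin> conn (gi ?f A)) = (A \<subseteq> ?E \<and> \<not> ?a A \<and> ?b A)"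
        using eqv3c(2)[where A=A and l="?l" and t="?t" and r="?r"] by simp
    qed
    finally show ?thesis by simp
  qed
  finally show ?thesis by simp
qed



lemma arith_core:
  fixes lam :: int
  shows "(-1) ^ (p + q) * lam ^ Suc j = (-1) ^ (j + p) * lam * ((1 - lam - 1) ^ j * (0 - 1) ^ q)"
proof -
  have ss: "(-1::int)^j * (-1)^j = 1" by (simp flip: power_add)
  have a: "(1 - lam - 1) = -lam" by simp
  have b: "(0::int) - 1 = -1" by simp
  have c: "(-lam)^j = (-1)^j * lam ^ j" by (rule power_minus)
  have gen: "\<And>s P Q l L::int. s*s = 1 \<Longrightarrow> P*Q*(l*L) = s*P*l*(s*L*Q)"
  proof -
    fix s P Q l L :: int assume "s*s = 1"
    have "s*P*l*(s*L*Q) = (s*s)*(P*Q*(l*L))" by (simp add: mult_ac)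
    thus "P*Q*(l*L) = s*P*l*(s*L*Q)" using \<open>s*s = 1\<close> by simp
  qed
  show ?thesis unfolding a b c power_add power_Suc by (rule gen[OF ss])
qed

lemma term_eq:
  fixes lam :: int
  assumes k1: "1 \<le> k" and kN: "k \<le> N" and Nk: "N \<le> k + c"
  shows "(-1) ^ c * lam ^ k = (-1) ^ (N - 1) * lam * ((1 - lam - 1) ^ ((N - 1) - (N - k)) * (0 - 1) ^ (c - (N - k)))"
proof -
  obtain j where j: "k = Suc j" using k1 by (cases k) auto
  obtain p where p: "N = k + p" using le_Suc_ex[OF kN] by blast
  have "p \<le> c" using Nk p by simp
  then obtain q where q: "c = p + q" using le_Suc_ex by blast
  have e1: "(N - 1) - (N - k) = j" using j p by simp
  have e2: "c - (N - k) = q" using p q by simp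
  have e3: "N - 1 = j + p" using j p by simp
  show ?thesis unfolding e1 e2 unfolding e3 unfolding q j by (rule arith_core)
qed

theorem proposition4p12:
  fixes n lam :: nat
  assumes "n \<ge> 1"
  shows "int (chromatic (sigV n) (sigE n) lam) = (-1) ^ (3 ^ n - 1) * int lam * Pn n (int lam)"
proof -
  obtain m where n: "n = Suc m" using assms by (cases n) auto
  let ?V = "sigV (Suc m)" and ?E = "sigE (Suc m)"
  let ?N = "card ?V"
  have fV: "finite ?V" by (rule finite_sigV)
  have fE: "finite ?E" by (rule finite_sigE)
  have eE: "\<forall>e\<in>?E. \<exists>u v. e = {u,v} \<and> u \<in> ?V \<and> v \<in> ?V" by (rule sigE_edges)
  have N: "?N = 3 ^ Suc m" by (rule card_sigV)
  have Vne: "?V \<noteq> {}" using corners_in(1) by auto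
  have "int (chromatic ?V ?E lam) = (\<Sum>A\<in>Pow ?E. (-1) ^ card A * int lam ^ ncomp ?V A)"
    by (rule chromatic_expansion[OF fV fE eE])
  also have "\<dots> = (\<Sum>A\<in>Pow ?E. (-1) ^ (?N - 1) * int lam * weight ?V ?E A (1 - int lam) 0)"
  proof (rule sum.cong[OF refl])
    fix A assume "A \<in> Pow ?E"
    hence AE: "A \<subseteq> ?E" by simp
    have fA: "finite A" using fE AE by (rule finite_subset[rotated])
    have eA: "\<forall>e\<in>A. \<exists>u v. e = {u,v} \<and> u \<in> ?V \<and> v \<in> ?V" using eE AE by blast
    have k1: "1 \<le> ncomp ?V A" by (rule ncomp_pos[OF fV Vne])
    have kN: "ncomp ?V A \<le> ?N" by (rule ncomp_le[OF fV])
    have Nk: "?N \<le> ncomp ?V A + card A" by (rule rank_le_card[OF fV fA eA])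
    have w: "weight ?V ?E A (1 - int lam) 0 = (1 - int lam - 1) ^ ((?N - 1) - (?N - ncomp ?V A)) * (0 - 1) ^ (card A - (?N - ncomp ?V A))"
      unfolding weight_def rk_def nullity_def ncomp_sig by simp
    show "(-1) ^ card A * int lam ^ ncomp ?V A = (-1) ^ (?N - 1) * int lam * weight ?V ?E A (1 - int lam) 0"
      unfolding w by (rule term_eq[OF k1 kN Nk])
  qed
  also have "\<dots> = (-1) ^ (?N - 1) * int lam * (\<Sum>A\<in>Pow ?E. weight ?V ?E A (1 - int lam) 0)"
    by (simp add: sum_distrib_left)
  also have "(\<Sum>A\<in>Pow ?E. weight ?V ?E A (1 - int lam) (0::int)) = Pn (Suc m) (int lam)"
    unfolding tutte_decomp Pn_def P2_def P1_def P0_def ..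
  finally show ?thesis unfolding n N .
qed


end
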